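(* Let $d\ge2$, let $g=\sum_{\mathbf k}g_{\mathbf k}u^{\mathbf k}\in R_d$ satisfy conditions (A)–(D) below, and let $s\ge d-2$ be an integer. Define $\omega\in\mathbb R^{\mathbb Z^d}$ by $\omega_{\mathbf 0}=0$ and $\omega_{\mathbf n}=\|\mathbf n\|^{-s}$ for $\mathbf n\ne\mathbf 0$, where $\|\cdot\|$ is the Euclidean norm. Then $g\cdot\omega\in\ell^1(\mathbb Z^d)$, where $(g\cdot\omega)_{\mathbf n}=\sum_{\mathbf k}g_{\mathbf k}\omega_{\mathbf n-\mathbf k}$. Conditions: (A) $\sum_{\mathbf k}g_{\mathbf k}=0$; (B) $\sum_{\mathbf k}g_{\mathbf k}k_i=0$ for all $i$; (C) $\sum_{\mathbf k}g_{\mathbf k}k_ik_j=0$ for all $i\ne j$; (D) $\sum_{\mathbf k}g_{\mathbf k}(k_i^2-k_j^2)=0$ for all $i\ne j$.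
   Context: $R_d=\mathbb Z[u_1^{\pm1},\dots,u_d^{\pm1}]$ with $u^{\mathbf k}=u_1^{k_1}\cdots u_d^{k_d}$; Laurent polynomials are identified with their finitely supported coefficient sequences on $\mathbb Z^d$. *)

theory Defs
  imports "HOL-Analysis.Analysis"
begin

text \<open>Laurent polynomials in R_d = Z[u_1^{+-1},...,u_d^{+-1}] are identified with their
  finitely supported coefficient functions on Z^d; the lattice Z^d is int^'n with d = CARD('n).\<close>

definition supp :: "(int ^ 'n \<Rightarrow> int) \<Rightarrow> (int ^ 'n) set" where
  "supp g = {k. g k \<noteq> 0}"

definition laurent_poly :: "(int ^ 'n \<Rightarrow> int) \<Rightarrow> bool" where
  "laurent_poly g \<longleftrightarrow> finite (supp g)"

definition lnorm :: "int ^ 'n::finite \<Rightarrow> real" where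
  "lnorm n = sqrt (\<Sum>i\<in>UNIV. (real_of_int (n $ i))\<^sup>2)"

definition omega :: "int \<Rightarrow> int ^ 'n::finite \<Rightarrow> real" where
  "omega s n = (if n = 0 then 0 else lnorm n powr (- real_of_int s))"

definition conv :: "(int ^ 'n \<Rightarrow> int) \<Rightarrow> (int ^ 'n \<Rightarrow> real) \<Rightarrow> int ^ 'n \<Rightarrow> real" where
  "conv g w n = (\<Sum>k\<in>supp g. real_of_int (g k) * w (n - k))"

end

theory Submission
  imports Defs
begin

lemma nat_shift_summable:
  fixes p :: real assumes "p > 1"
  shows "(\<lambda>n::nat. real (n + k) powr (-p)) summable_on UNIV"
proof -
  have "summable (\<lambda>n::nat. real n powr (-p))" using assms by (subst summable_real_powr_iff) auto
  hence "summable (\<lambda>n::nat. real (n + k) powr (-p))"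
    by (subst summable_iff_shift[where k=k]) simp
  thus ?thesis by (subst summable_on_UNIV_nonneg_real_iff) auto
qed

lemma h_int_summable:
  fixes p :: real assumes p: "p > 1"
  shows "(\<lambda>z::int. (1 + \<bar>real_of_int z\<bar>) powr (-p)) summable_on UNIV"
proof -
  let ?h = "\<lambda>z::int. (1 + \<bar>real_of_int z\<bar>) powr (-p)"
  have U: "(UNIV::int set) = (\<lambda>n. int n) ` UNIV \<union> (\<lambda>n. - int n - 1) ` UNIV"
  proof -
    { fix z :: int
      have "z \<in> (\<lambda>n. int n) ` UNIV \<union> (\<lambda>n. - int n - 1) ` UNIV"
      proof (cases "z \<ge> 0")
        case True thus ?thesis by (metis UnI1 nonneg_int_cases rangeI)
      next
        case False
        hence "z = - int (nat (-z-1)) - 1" by simp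
        thus ?thesis by (metis UnI2 rangeI)
      qed }
    thus ?thesis by auto
  qed
  have 1: "?h summable_on (\<lambda>n. int n) ` UNIV"
    apply (subst summable_on_reindex) apply (simp add: inj_on_def)
    using nat_shift_summable[OF p, of 1] by (simp add: o_def add.commute)
  have 2: "?h summable_on (\<lambda>n. - int n - 1) ` UNIV"
    apply (subst summable_on_reindex) apply (simp add: inj_on_def)
    using nat_shift_summable[OF p, of 2] by (simp add: o_def add.commute)
  have "?h summable_on ((\<lambda>n. int n) ` UNIV \<union> (\<lambda>n. - int n - 1) ` UNIV)"
    by (rule summable_on_Un_disjoint[OF 1 2]) auto
  thus ?thesis using U by simp
qed

lemma prod_vec_summable:
  fixes h :: "int \<Rightarrow> real"
  assumes hs: "h summable_on UNIV" and hp: "\<And>z. h z \<ge> 0"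
  shows "(\<lambda>n::int^'n::finite. \<Prod>i\<in>UNIV. h (n$i)) summable_on UNIV"
proof (rule nonneg_bdd_above_summable_on)
  show "\<And>x. x \<in> UNIV \<Longrightarrow> 0 \<le> (\<Prod>i\<in>UNIV. h (x$i))" using hp by (simp add: prod_nonneg)
  show "bdd_above (sum (\<lambda>n::int^'n. \<Prod>i\<in>UNIV. h (n$i)) ` {F. F \<subseteq> UNIV \<and> finite F})"
  proof (rule bdd_aboveI2)
    fix F :: "(int^'n) set" assume "F \<in> {F. F \<subseteq> UNIV \<and> finite F}"
    hence F: "finite F" by simp
    define S where "S = (\<Union>i. (\<lambda>n. n$i) ` F)"
    have S: "finite S" unfolding S_def using F by auto
    have "(\<Sum>n\<in>F. \<Prod>i\<in>UNIV. h (n$i)) = (\<Sum>f\<in>vec_nth ` F. \<Prod>i\<in>UNIV. h (f i))"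
      by (subst sum.reindex) (auto simp: inj_on_def vec_eq_iff)
    also have "\<dots> \<le> (\<Sum>f\<in>PiE (UNIV::'n set) (\<lambda>_. S). \<Prod>i\<in>UNIV. h (f i))"
      apply (rule sum_mono2)
      subgoal using S by (simp add: finite_PiE)
      subgoal by (auto simp: S_def PiE_def Pi_def)
      subgoal using hp by (simp add: prod_nonneg)
      done
    also have "\<dots> = (\<Prod>i\<in>(UNIV::'n set). \<Sum>z\<in>S. h z)"
      by (subst prod_sum_PiE) (use S in auto)
    also have "\<dots> \<le> (\<Prod>i\<in>(UNIV::'n set). infsum h UNIV)"
      apply (rule prod_mono)
      apply (auto simp: hp sum_nonneg)
      apply (subst infsum_finite[symmetric, OF S])
      apply (rule infsum_mono_neutral) using S hs hp by auto
    finally show "(\<Sum>n\<in>F. \<Prod>i\<in>UNIV. h (n$i)) \<le> (\<Prod>i\<in>(UNIV::'n set). infsum h UNIV)" .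
  qed
qed

lemma lnorm_ge1: fixes n :: "int^'n::finite" assumes "n \<noteq> 0" shows "lnorm n \<ge> 1"
proof -
  obtain i where i: "n$i \<noteq> 0" using assms by (metis vec_eq_iff zero_index)
  have "1 \<le> (real_of_int (n$i))\<^sup>2" using i
    by (metis abs_ge_self dual_order.trans int_one_le_iff_zero_less less_int_code(1) linorder_neqE_linordered_idom nat_less_le of_int_1_le_iff of_int_power one_le_power power2_abs zero_less_abs_iff)
  also have "\<dots> \<le> (\<Sum>j\<in>UNIV. (real_of_int (n$j))\<^sup>2)"
    by (rule member_le_sum) auto
  finally show ?thesis unfolding lnorm_def by simp
qed

lemma abs_le_lnorm: fixes n :: "int^'n::finite" shows "\<bar>real_of_int (n$i)\<bar> \<le> lnorm n"
proof -
  have "(real_of_int (n$i))\<^sup>2 \<le> (\<Sum>j\<in>UNIV. (real_of_int (n$j))\<^sup>2)"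
    by (rule member_le_sum) auto
  thus ?thesis unfolding lnorm_def by (metis real_sqrt_abs real_sqrt_le_mono)
qed

lemma lnorm_nonneg: "lnorm n \<ge> 0" unfolding lnorm_def by (simp add: sum_nonneg)

lemma lattice_summable:
  "(\<lambda>n::int^'n::finite. if n = 0 then 0 else lnorm n powr (-(real CARD('n)+1))) summable_on UNIV"
proof -
  define d where "d = real CARD('n)"
  have d1: "d \<ge> 1" unfolding d_def by simp
  define p where "p = (d+1)/d"
  have p1: "p > 1" unfolding p_def using d1 by (simp add: field_simps)
  define h where "h = (\<lambda>z::int. (1 + \<bar>real_of_int z\<bar>) powr (-p))"
  have hs: "h summable_on UNIV" unfolding h_def by (rule h_int_summable[OF p1])
  have ps: "(\<lambda>n::int^'n. \<Prod>i\<in>UNIV. h (n$i)) summable_on UNIV"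
    by (rule prod_vec_summable[OF hs]) (simp add: h_def)
  hence ps2: "(\<lambda>n::int^'n. 2 powr (d+1) * (\<Prod>i\<in>UNIV. h (n$i))) summable_on UNIV"
    by (rule summable_on_cmult_right)
  show ?thesis
  proof (rule summable_on_comparison_test[OF ps2])
    fix n :: "int^'n"
    show "0 \<le> (if n = 0 then 0 else lnorm n powr (-(real CARD('n)+1)))" by simp
    show "(if n = 0 then 0 else lnorm n powr (-(real CARD('n)+1))) \<le> 2 powr (d+1) * (\<Prod>i\<in>UNIV. h (n$i))"
    proof (cases "n = 0")
      case True thus ?thesis by (simp add: h_def prod_nonneg)
    next
      case False
      define L where "L = lnorm n"
      have L1: "L \<ge> 1" unfolding L_def using lnorm_ge1[OF False] .
      have "(\<Prod>i\<in>(UNIV::'n set). 1 + \<bar>real_of_int (n$i)\<bar>) \<le> (\<Prod>i\<in>(UNIV::'n set). 2*L)"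
        apply (rule prod_mono) using abs_le_lnorm[of n] L1 unfolding L_def by (smt (verit))
      also have "\<dots> = (2*L) powr d" using L1 unfolding d_def by (simp add: powr_realpow)
      finally have P: "(\<Prod>i\<in>(UNIV::'n set). 1 + \<bar>real_of_int (n$i)\<bar>) \<le> (2*L) powr d" .
      have Ppos: "(\<Prod>i\<in>(UNIV::'n set). 1 + \<bar>real_of_int (n$i)\<bar>) > 0"
        by (rule prod_pos) auto
      have "(\<Prod>i\<in>UNIV. h (n$i)) = (\<Prod>i\<in>(UNIV::'n set). 1 + \<bar>real_of_int (n$i)\<bar>) powr (-p)"
        unfolding h_def by (simp add: prod_powr_distrib)
      also have "\<dots> \<ge> ((2*L) powr d) powr (-p)"
        by (rule powr_mono2'[OF _ Ppos P]) (use p1 in simp)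
      finally have "(\<Prod>i\<in>UNIV. h (n$i)) \<ge> (2*L) powr (-(d+1))"
        using d1 by (simp add: powr_powr p_def)
      hence "2 powr (d+1) * (\<Prod>i\<in>UNIV. h (n$i)) \<ge> 2 powr (d+1) * (2*L) powr (-(d+1))"
        by simp
      also have "2 powr (d+1) * (2*L) powr (-(d+1)) = L powr (-(d+1))"
        using L1 by (simp add: powr_mult powr_add[symmetric])
      finally show ?thesis using False unfolding L_def d_def by simp
    qed
  qed
qed

lemma DERIV_qpow:
  fixes Q :: "real \<Rightarrow> real"
  assumes "(Q has_real_derivative D) (at t)" "Q t > 0"
  shows "((\<lambda>t. Q t powr r) has_real_derivative r * Q t powr (r - 1) * D) (at t)"
  using DERIV_fun_powr[OF assms, of r] by simp

lemma mac3:
  fixes a b c e :: real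
  defines "q \<equiv> \<lambda>t. a - 2*b*t + c*t^2"
  defines "q' \<equiv> \<lambda>t. 2*c*t - 2*b"
  assumes qpos: "\<And>t. 0 \<le> t \<Longrightarrow> t \<le> 1 \<Longrightarrow> q t > 0"
  shows "\<exists>t. 0 < t \<and> t < 1 \<and> q 1 powr e =
     a powr e + e * a powr (e-1) * (-2*b)
     + (e*(e-1) * a powr (e-2) * (-2*b)^2 + e * a powr (e-1) * (2*c)) / 2
     + (e*(e-1)*(e-2) * q t powr (e-3) * (q' t)^3 + 3*e*(e-1) * q t powr (e-2) * q' t * (2*c)) / 6"
proof -
  define diff where "diff = (\<lambda>(m::nat) (t::real). if m = 0 then q t powr e
     else if m = 1 then e * q t powr (e-1) * q' t
     else if m = 2 then e*(e-1) * q t powr (e-2) * (q' t)^2 + e * q t powr (e-1) * (2*c)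
     else e*(e-1)*(e-2) * q t powr (e-3) * (q' t)^3 + 3*e*(e-1) * q t powr (e-2) * q' t * (2*c))"
  have dq: "\<And>t. (q has_real_derivative q' t) (at t)"
    unfolding q_def q'_def by (auto intro!: derivative_eq_intros)
  have dq': "\<And>t. (q' has_real_derivative 2*c) (at t)"
    unfolding q'_def by (auto intro!: derivative_eq_intros)
  have D: "\<forall>m t. m < 3 \<and> 0 \<le> t \<and> t \<le> 1 \<longrightarrow> DERIV (diff m) t :> diff (Suc m) t"
  proof (intro allI impI)
    fix m :: nat and t :: real assume mt: "m < 3 \<and> 0 \<le> t \<and> t \<le> 1"
    hence qt: "q t > 0" using qpos by auto
    have P: "\<And>r. ((\<lambda>t. q t powr r) has_real_derivative r * q t powr (r - 1) * q' t) (at t)"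
      by (rule DERIV_qpow[OF dq qt])
    consider "m = 0" | "m = 1" | "m = 2" using mt by linarith
    thus "DERIV (diff m) t :> diff (Suc m) t"
    proof cases
      case 1
      show ?thesis unfolding 1 diff_def using P[of e] by simp
    next
      case 2
      have "((\<lambda>t. e * q t powr (e-1) * q' t) has_real_derivative
          e * ((e-1) * q t powr (e-1-1) * q' t) * q' t + e * q t powr (e-1) * (2*c)) (at t)"
        by (auto intro!: derivative_eq_intros P dq' dq qt)
      thus ?thesis unfolding 2 diff_def by (simp add: power2_eq_square algebra_simps)
    next
      case 3
      have "((\<lambda>t. e*(e-1) * q t powr (e-2) * (q' t)^2 + e * q t powr (e-1) * (2*c)) has_real_derivative
          e*(e-1) * ((e-2) * q t powr (e-2-1) * q' t) * (q' t)^2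
          + e*(e-1) * q t powr (e-2) * (2 * q' t * (2*c))
          + e * ((e-1) * q t powr (e-1-1) * q' t) * (2*c)) (at t)"
        by (auto intro!: derivative_eq_intros P dq' dq qt simp: power2_eq_square)
      thus ?thesis unfolding 3 diff_def by (simp add: power2_eq_square power3_eq_cube algebra_simps)
    qed
  qed
  obtain t where t: "0 < t" "t < 1"
    "diff 0 1 = (\<Sum>m<3. diff m 0 / fact m * 1 ^ m) + diff 3 t / fact 3 * 1 ^ 3"
    using Maclaurin[of 1 3 diff "diff 0", OF _ _ refl D] by auto
  have q0: "q 0 = a" "q' 0 = -2*b" unfolding q_def q'_def by auto
  show ?thesis
    apply (rule exI[of _ t])
    using t by (simp add: diff_def q0 numeral_3_eq_3 fact_numeral)
qed

lemma qpow_bound: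
  fixes L Q x :: real
  assumes L: "L > 0" and Q: "Q \<ge> L^2/4" and x: "x \<le> 0"
  shows "Q powr x \<le> 4 powr (-x) * L powr (2*x)"
proof -
  have "Q powr x \<le> (L^2/4) powr x"
    by (rule powr_mono2'[OF x _ Q]) (use L in simp)
  also have "(L^2/4) powr x = L powr (2*x) * 4 powr (-x)"
  proof -
    have "(L^2/4) powr x = (L^2) powr x / 4 powr x" by (rule powr_divide)
    also have "(L^2) powr x = L powr (2*x)" using L
      by (metis of_nat_numeral powr_powr powr_realpow)
    also have "1 / 4 powr x = 4 powr (-x)" by (simp add: powr_minus_divide)
    hence "L powr (2*x) / 4 powr x = L powr (2*x) * 4 powr (-x)" by (metis times_divide_eq_right mult_1_right)
    finally show ?thesis .
  qed
  finally show ?thesis by (simp add: mult.commute)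
qed

lemma rem_bound:
  fixes L R b c e t :: real
  assumes L: "L > 0" and R: "R \<ge> 0" "R \<le> L/2" and b: "\<bar>b\<bar> \<le> L*R" and c: "c = R^2"
    and e: "e \<le> 0" and t: "0 \<le> t" "t \<le> 1"
    and Q: "a - 2*b*t + c*t^2 \<ge> L^2/4"
  shows "\<bar>(e*(e-1)*(e-2) * (a - 2*b*t + c*t^2) powr (e-3) * (2*c*t - 2*b)^3
          + 3*e*(e-1) * (a - 2*b*t + c*t^2) powr (e-2) * (2*c*t - 2*b) * (2*c)) / 6\<bar>
     \<le> ((27*\<bar>e*(e-1)*(e-2)\<bar> * 4 powr (3-e) + 18*\<bar>e*(e-1)\<bar> * 4 powr (2-e))/6) * R^3 * L powr (2*e-3)"
proof -
  define q where "q = a - 2*b*t + c*t^2"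
  define q' where "q' = 2*c*t - 2*b"
  have q'b: "\<bar>q'\<bar> \<le> 3*L*R"
  proof -
    have ct: "0 \<le> c*t" using c t by simp
    have "\<bar>q'\<bar> \<le> 2*c*t + 2*\<bar>b\<bar>" unfolding q'_def using ct by linarith
    also have "\<dots> \<le> 2*R^2 + 2*(L*R)" using c t b R by (intro add_mono) (auto simp: mult_left_le)
    also have "R^2 \<le> L*R/2" using R mult_right_mono[of "2*R" L R] by (simp add: power2_eq_square)
    hence "2*R^2 + 2*(L*R) \<le> 3*L*R" by simp
    finally show ?thesis .
  qed
  have Qq: "q \<ge> L^2/4" using Q unfolding q_def .
  have P3: "q powr (e-3) \<le> 4 powr (3-e) * L powr (2*e-6)"
    using qpow_bound[OF L Qq, of "e-3"] e by (simp add: algebra_simps)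
  have P2: "q powr (e-2) \<le> 4 powr (2-e) * L powr (2*e-4)"
    using qpow_bound[OF L Qq, of "e-2"] e by (simp add: algebra_simps)
  have L3: "L powr (2*e-6) * L^3 = L powr (2*e-3)"
  proof -
    have "L^3 = L powr 3" using L powr_realpow[of L 3] by simp
    moreover have "L powr (2*e-6) * L powr 3 = L powr (2*e-6+3)" by (rule powr_add[symmetric])
    ultimately show ?thesis by simp
  qed
  have L1: "L powr (2*e-4) * L = L powr (2*e-3)"
  proof -
    have "L powr (2*e-4) * L powr 1 = L powr (2*e-4+1)" by (rule powr_add[symmetric])
    thus ?thesis using L by simp
  qed
  have T1: "\<bar>e*(e-1)*(e-2) * q powr (e-3) * q'^3\<bar> \<le> \<bar>e*(e-1)*(e-2)\<bar> * (4 powr (3-e) * L powr (2*e-6)) * (3*L*R)^3"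
  proof -
    have a: "\<bar>q'\<bar>^3 \<le> (3*L*R)^3" by (rule power_mono[OF q'b]) simp
    have s1: "\<bar>e*(e-1)*(e-2)\<bar> * q powr (e-3) \<le> \<bar>e*(e-1)*(e-2)\<bar> * (4 powr (3-e) * L powr (2*e-6))"
      by (rule mult_left_mono[OF P3]) simp
    have "\<bar>e*(e-1)*(e-2) * q powr (e-3) * q'^3\<bar> = (\<bar>e*(e-1)*(e-2)\<bar> * q powr (e-3)) * \<bar>q'\<bar>^3"
      by (simp add: abs_mult power_abs)
    also have "\<dots> \<le> (\<bar>e*(e-1)*(e-2)\<bar> * (4 powr (3-e) * L powr (2*e-6))) * (3*L*R)^3"
      by (rule mult_mono[OF s1 a]) auto
    finally show ?thesis .
  qed
  have "\<bar>e*(e-1)*(e-2)\<bar> * (4 powr (3-e) * L powr (2*e-6)) * (3*L*R)^3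
       = 27*\<bar>e*(e-1)*(e-2)\<bar> * 4 powr (3-e) * R^3 * (L powr (2*e-6) * L^3)"
    by (simp add: power_mult_distrib)
  also have "\<dots> = 27*\<bar>e*(e-1)*(e-2)\<bar> * 4 powr (3-e) * R^3 * L powr (2*e-3)" by (simp only: L3)
  finally have E1: "\<bar>e*(e-1)*(e-2)\<bar> * (4 powr (3-e) * L powr (2*e-6)) * (3*L*R)^3 = 27*\<bar>e*(e-1)*(e-2)\<bar> * 4 powr (3-e) * R^3 * L powr (2*e-3)" .
  have T1': "\<bar>e*(e-1)*(e-2) * q powr (e-3) * q'^3\<bar> \<le> 27*\<bar>e*(e-1)*(e-2)\<bar> * 4 powr (3-e) * R^3 * L powr (2*e-3)"
    using order_trans[OF T1 E1[THEN eq_refl]] .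
  have cb: "\<bar>2*c\<bar> \<le> 2*R^2" using c by simp
  have T2: "\<bar>3*e*(e-1) * q powr (e-2) * q' * (2*c)\<bar> \<le> 3*\<bar>e*(e-1)\<bar> * (4 powr (2-e) * L powr (2*e-4)) * (3*L*R) * (2*R^2)"
  proof -
    have s1: "3*\<bar>e*(e-1)\<bar> * q powr (e-2) \<le> 3*\<bar>e*(e-1)\<bar> * (4 powr (2-e) * L powr (2*e-4))"
      by (rule mult_left_mono[OF P2]) simp
    have s2: "(3*\<bar>e*(e-1)\<bar> * q powr (e-2)) * \<bar>q'\<bar> \<le> (3*\<bar>e*(e-1)\<bar> * (4 powr (2-e) * L powr (2*e-4))) * (3*L*R)"
      by (rule mult_mono[OF s1 q'b]) auto
    have "\<bar>3*e*(e-1) * q powr (e-2) * q' * (2*c)\<bar> = ((3*\<bar>e*(e-1)\<bar> * q powr (e-2)) * \<bar>q'\<bar>) * \<bar>2*c\<bar>"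
      by (simp add: abs_mult)
    also have "\<dots> \<le> ((3*\<bar>e*(e-1)\<bar> * (4 powr (2-e) * L powr (2*e-4))) * (3*L*R)) * (2*R^2)"
      by (rule mult_mono[OF s2 cb]) (use L R in auto)
    finally show ?thesis .
  qed
  have "3*\<bar>e*(e-1)\<bar> * (4 powr (2-e) * L powr (2*e-4)) * (3*L*R) * (2*R^2)
      = 18*\<bar>e*(e-1)\<bar> * 4 powr (2-e) * R^3 * (L powr (2*e-4) * L)"
    by (simp add: power2_eq_square power3_eq_cube)
  also have "\<dots> = 18*\<bar>e*(e-1)\<bar> * 4 powr (2-e) * R^3 * L powr (2*e-3)" by (simp only: L1)
  finally have E2: "3*\<bar>e*(e-1)\<bar> * (4 powr (2-e) * L powr (2*e-4)) * (3*L*R) * (2*R^2) = 18*\<bar>e*(e-1)\<bar> * 4 powr (2-e) * R^3 * L powr (2*e-3)" .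
  have T2': "\<bar>3*e*(e-1) * q powr (e-2) * q' * (2*c)\<bar> \<le> 18*\<bar>e*(e-1)\<bar> * 4 powr (2-e) * R^3 * L powr (2*e-3)"
    using order_trans[OF T2 E2[THEN eq_refl]] .
  have "\<bar>(e*(e-1)*(e-2) * q powr (e-3) * q'^3 + 3*e*(e-1) * q powr (e-2) * q' * (2*c)) / 6\<bar>
      \<le> (27*\<bar>e*(e-1)*(e-2)\<bar> * 4 powr (3-e) * R^3 * L powr (2*e-3) + 18*\<bar>e*(e-1)\<bar> * 4 powr (2-e) * R^3 * L powr (2*e-3)) / 6"
  proof -
    let ?X = "e*(e-1)*(e-2) * q powr (e-3) * q'^3" and ?Y = "3*e*(e-1) * q powr (e-2) * q' * (2*c)"
    have "\<bar>?X + ?Y\<bar> \<le> \<bar>?X\<bar> + \<bar>?Y\<bar>" by (rule abs_triangle_ineq)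
    also have "\<dots> \<le> 27*\<bar>e*(e-1)*(e-2)\<bar> * 4 powr (3-e) * R^3 * L powr (2*e-3) + 18*\<bar>e*(e-1)\<bar> * 4 powr (2-e) * R^3 * L powr (2*e-3)"
      by (rule add_mono[OF T1' T2'])
    finally show ?thesis by simp
  qed
  also have "\<dots> = ((27*\<bar>e*(e-1)*(e-2)\<bar> * 4 powr (3-e) + 18*\<bar>e*(e-1)\<bar> * 4 powr (2-e))/6) * R^3 * L powr (2*e-3)"
    by (simp add: algebra_simps)
  finally show ?thesis unfolding q_def q'_def .
qed

lemma norm_sq_line:
  fixes N K :: "'a::real_inner"
  shows "(norm (N - t *\<^sub>R K))^2 = N \<bullet> N - 2 * (N \<bullet> K) * t + (K \<bullet> K) * t^2"
proof -
  have "(norm (N - t *\<^sub>R K))^2 = (N - t *\<^sub>R K) \<bullet> (N - t *\<^sub>R K)" by (rule power2_norm_eq_inner)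
  also have "\<dots> = N \<bullet> N - 2 * (N \<bullet> K) * t + (K \<bullet> K) * t^2"
    by (simp add: inner_diff_left inner_diff_right inner_commute[of K N] power2_eq_square algebra_simps)
  finally show ?thesis .
qed

lemma term_expand:
  fixes N K :: "'a::real_inner" and e :: real
  assumes L: "norm N \<ge> 1" and KN: "norm K \<le> norm N / 2" and e: "e \<le> 0"
  shows "\<bar>norm (N - K) powr (2*e) - ((N\<bullet>N) powr e + e * (N\<bullet>N) powr (e-1) * (-2*(N\<bullet>K))
          + (e*(e-1) * (N\<bullet>N) powr (e-2) * (-2*(N\<bullet>K))^2 + e * (N\<bullet>N) powr (e-1) * (2*(K\<bullet>K))) / 2)\<bar>
       \<le> ((27*\<bar>e*(e-1)*(e-2)\<bar> * 4 powr (3-e) + 18*\<bar>e*(e-1)\<bar> * 4 powr (2-e))/6) * norm K ^3 * norm N powr (2*e-3)"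
proof -
  define a where "a = N \<bullet> N"
  define b where "b = N \<bullet> K"
  define c where "c = K \<bullet> K"
  define L where "L = norm N"
  define R where "R = norm K"
  have L0: "L > 0" using L unfolding L_def by auto
  have R0: "R \<ge> 0" unfolding R_def by simp
  have RL: "R \<le> L/2" using KN unfolding R_def L_def .
  have qeq: "\<And>t. a - 2*b*t + c*t^2 = (norm (N - t *\<^sub>R K))^2"
    unfolding a_def b_def c_def by (subst norm_sq_line) (simp add: ac_simps)
  have qlow: "\<And>t. 0 \<le> t \<Longrightarrow> t \<le> 1 \<Longrightarrow> a - 2*b*t + c*t^2 \<ge> L^2/4"
  proof -
    fix t :: real assume t: "0 \<le> t" "t \<le> 1"
    have "norm (t *\<^sub>R K) \<le> R" using t unfolding R_def by (simp add: mult_left_le_one_le)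
    moreover have "norm N - norm (t *\<^sub>R K) \<le> norm (N - t *\<^sub>R K)" by (rule norm_triangle_ineq2)
    ultimately have "norm (N - t *\<^sub>R K) \<ge> L - R" unfolding L_def by linarith
    hence "norm (N - t *\<^sub>R K) \<ge> L/2" using RL by linarith
    hence "(L/2)^2 \<le> (norm (N - t *\<^sub>R K))^2" by (rule power_mono) (use L0 in simp)
    thus "a - 2*b*t + c*t^2 \<ge> L^2/4" unfolding qeq by (simp add: power_divide)
  qed
  have qpos: "\<And>t. 0 \<le> t \<Longrightarrow> t \<le> 1 \<Longrightarrow> a - 2*b*t + c*t^2 > 0"
    using qlow L0 by (smt (verit) zero_less_power divide_pos_pos)
  obtain t where t: "0 < t" "t < 1" and eq: "(a - 2*b*1 + c*1^2) powr e =
     a powr e + e * a powr (e-1) * (-2*b)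
     + (e*(e-1) * a powr (e-2) * (-2*b)^2 + e * a powr (e-1) * (2*c)) / 2
     + (e*(e-1)*(e-2) * (a - 2*b*t + c*t^2) powr (e-3) * (2*c*t - 2*b)^3 + 3*e*(e-1) * (a - 2*b*t + c*t^2) powr (e-2) * (2*c*t - 2*b) * (2*c)) / 6"
    using mac3[of a b c e, OF qpos] by blast
  have NK: "N \<noteq> K" using KN L by auto
  have "(a - 2*b*1 + c*1^2) powr e = ((norm (N - K))^2) powr e" using qeq[of 1] by simp
  also have "\<dots> = norm (N - K) powr (2*e)"
  proof -
    have xp: "norm (N - K) > 0" using NK by simp
    have h: "(norm (N - K))^2 = norm (N - K) powr 2" using powr_realpow[OF xp, of 2] by simp
    show ?thesis by (subst h) (rule powr_powr)
  qed
  finally have eq2: "(a - 2*b*1 + c*1^2) powr e = norm (N - K) powr (2*e)" .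
  have b: "\<bar>b\<bar> \<le> L*R" unfolding b_def L_def R_def by (rule Cauchy_Schwarz_ineq2)
  have c: "c = R^2" unfolding c_def R_def by (simp add: power2_norm_eq_inner)
  have rb: "\<bar>(e*(e-1)*(e-2) * (a - 2*b*t + c*t^2) powr (e-3) * (2*c*t - 2*b)^3 + 3*e*(e-1) * (a - 2*b*t + c*t^2) powr (e-2) * (2*c*t - 2*b) * (2*c)) / 6\<bar>
     \<le> ((27*\<bar>e*(e-1)*(e-2)\<bar> * 4 powr (3-e) + 18*\<bar>e*(e-1)\<bar> * 4 powr (2-e))/6) * R^3 * L powr (2*e-3)"
    by (rule rem_bound[OF L0 R0 RL b c e]) (use t qlow in auto)
  define P where "P = a powr e + e * a powr (e-1) * (-2*b)
     + (e*(e-1) * a powr (e-2) * (-2*b)^2 + e * a powr (e-1) * (2*c)) / 2"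
  define Rm where "Rm = (e*(e-1)*(e-2) * (a - 2*b*t + c*t^2) powr (e-3) * (2*c*t - 2*b)^3 + 3*e*(e-1) * (a - 2*b*t + c*t^2) powr (e-2) * (2*c*t - 2*b) * (2*c)) / 6"
  have e1: "(a - 2*b*1 + c*1^2) powr e = P + Rm" using eq unfolding P_def Rm_def .
  have "norm (N - K) powr (2*e) - P = Rm" using e1 eq2 by linarith
  hence "\<bar>norm (N - K) powr (2*e) - P\<bar> \<le> ((27*\<bar>e*(e-1)*(e-2)\<bar> * 4 powr (3-e) + 18*\<bar>e*(e-1)\<bar> * 4 powr (2-e))/6) * R^3 * L powr (2*e-3)"
    using rb unfolding Rm_def[symmetric] by simp
  thus ?thesis unfolding P_def a_def b_def c_def R_def L_def .
qed

lemma sum_lin: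
  fixes G :: "'k \<Rightarrow> real" and X :: "'k \<Rightarrow> 'n::finite \<Rightarrow> real"
  assumes "\<And>i. (\<Sum>k\<in>S. G k * X k i) = 0"
  shows "(\<Sum>k\<in>S. G k * (\<Sum>i\<in>UNIV. y i * X k i)) = 0"
proof -
  have "(\<Sum>k\<in>S. G k * (\<Sum>i\<in>UNIV. y i * X k i)) = (\<Sum>k\<in>S. \<Sum>i\<in>UNIV. y i * (G k * X k i))"
    by (simp add: sum_distrib_left algebra_simps)
  also have "\<dots> = (\<Sum>i\<in>UNIV. \<Sum>k\<in>S. y i * (G k * X k i))" by (rule sum.swap)
  also have "\<dots> = (\<Sum>i\<in>UNIV. y i * (\<Sum>k\<in>S. G k * X k i))" by (simp add: sum_distrib_left)
  also have "\<dots> = 0" using assms by simp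
  finally show ?thesis .
qed

lemma sum_quad:
  fixes G :: "'k \<Rightarrow> real" and X :: "'k \<Rightarrow> 'n::finite \<Rightarrow> real"
  assumes M: "\<And>i j. (\<Sum>k\<in>S. G k * X k i * X k j) = (if i = j then M else 0)"
  shows "(\<Sum>k\<in>S. G k * (\<Sum>i\<in>UNIV. y i * X k i)^2) = M * (\<Sum>i\<in>UNIV. (y i)^2)"
    and "(\<Sum>k\<in>S. G k * (\<Sum>i\<in>UNIV. (X k i)^2)) = M * real CARD('n)"
proof -
  have "(\<Sum>k\<in>S. G k * (\<Sum>i\<in>UNIV. y i * X k i)^2)
      = (\<Sum>k\<in>S. \<Sum>i\<in>UNIV. \<Sum>j\<in>UNIV. y i * y j * (G k * X k i * X k j))"
    by (simp add: power2_eq_square sum_product sum_distrib_left algebra_simps)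
  also have "\<dots> = (\<Sum>i\<in>UNIV. \<Sum>j\<in>UNIV. \<Sum>k\<in>S. y i * y j * (G k * X k i * X k j))"
    by (simp add: sum.swap[of _ S])
  also have "\<dots> = (\<Sum>i\<in>UNIV. \<Sum>j\<in>UNIV. y i * y j * (if i = j then M else 0))"
    by (simp add: sum_distrib_left[symmetric] M)
  also have "\<dots> = M * (\<Sum>i\<in>UNIV. (y i)^2)"
    by (simp add: sum_distrib_left power2_eq_square mult.commute if_distrib cong: if_cong)
  finally show "(\<Sum>k\<in>S. G k * (\<Sum>i\<in>UNIV. y i * X k i)^2) = M * (\<Sum>i\<in>UNIV. (y i)^2)" .
  have "(\<Sum>k\<in>S. G k * (\<Sum>i\<in>UNIV. (X k i)^2)) = (\<Sum>i\<in>UNIV. \<Sum>k\<in>S. G k * X k i * X k i)"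
    by (simp add: sum_distrib_left power2_eq_square algebra_simps sum.swap[of _ S])
  also have "\<dots> = (\<Sum>i\<in>(UNIV::'n set). M)" using M by simp
  finally show "(\<Sum>k\<in>S. G k * (\<Sum>i\<in>UNIV. (X k i)^2)) = M * real CARD('n)" by simp
qed

definition rv :: "int^'n::finite \<Rightarrow> real^'n" where
  "rv n = (\<chi> i. real_of_int (n$i))"

lemma norm_rv: "norm (rv n) = lnorm n"
  by (simp add: rv_def norm_vec_def L2_set_def lnorm_def)

lemma rv_diff: "rv (n - k) = rv n - rv k"
  by (simp add: rv_def vec_eq_iff)

lemma inner_rv: "rv n \<bullet> rv k = (\<Sum>i\<in>UNIV. real_of_int (n$i) * real_of_int (k$i))"
  by (simp add: rv_def inner_vec_def)

lemma inner_rv_self: "rv k \<bullet> rv k = (\<Sum>i\<in>UNIV. (real_of_int (k$i))^2)"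
  by (simp add: rv_def inner_vec_def power2_eq_square)

lemma finite_lnorm_ball: "finite {n::int^'n::finite. lnorm n < B}"
proof -
  define S where "S = {-\<lceil>B\<rceil>..\<lceil>B\<rceil>}"
  have "vec_nth ` {n::int^'n. lnorm n < B} \<subseteq> PiE UNIV (\<lambda>_. S)"
  proof
    fix f assume "f \<in> vec_nth ` {n::int^'n. lnorm n < B}"
    then obtain n :: "int^'n" where n: "lnorm n < B" "f = vec_nth n" by auto
    { fix i
      have "\<bar>real_of_int (n$i)\<bar> < B" using abs_le_lnorm[of n i] n by linarith
      hence "\<bar>n$i\<bar> \<le> \<lceil>B\<rceil>" by linarith
      hence "n$i \<in> S" unfolding S_def by auto }
    thus "f \<in> PiE UNIV (\<lambda>_. S)" using n by auto
  qed
  moreover have "finite (PiE (UNIV::'n set) (\<lambda>_. S))" unfolding S_def by (simp add: finite_PiE)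
  ultimately have "finite (vec_nth ` {n::int^'n. lnorm n < B})" by (rule finite_subset)
  thus ?thesis by (rule finite_imageD) (auto simp: inj_on_def vec_eq_iff)
qed

lemma sq_powr: "(L::real) > 0 \<Longrightarrow> (L^2) powr x = L powr (2*x)"
proof -
  assume L: "L > 0"
  have h: "L^2 = L powr 2" using powr_realpow[OF L, of 2] by simp
  show ?thesis by (subst h) (rule powr_powr)
qed

lemma main_bound:
  fixes g :: "int ^ 'n::finite \<Rightarrow> int" and s :: int
  assumes d2: "CARD('n) \<ge> 2"
    and lp: "laurent_poly g"
    and A: "(\<Sum>k\<in>supp g. g k) = 0"
    and B: "\<And>i. (\<Sum>k\<in>supp g. g k * k $ i) = 0"
    and C: "\<And>i j. i \<noteq> j \<Longrightarrow> (\<Sum>k\<in>supp g. g k * k $ i * k $ j) = 0"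
    and D: "\<And>i j. i \<noteq> j \<Longrightarrow> (\<Sum>k\<in>supp g. g k * ((k $ i)\<^sup>2 - (k $ j)\<^sup>2)) = 0"
    and s: "s \<ge> int CARD('n) - 2"
  shows "\<exists>K0 B0. \<forall>n. lnorm n \<ge> B0 \<longrightarrow> \<bar>conv g (omega s) n\<bar> \<le> K0 * lnorm n powr (-(real CARD('n)+1))"
proof -
  define S where "S = supp g"
  have finS: "finite S" using lp unfolding S_def laurent_poly_def .
  define G where "G = (\<lambda>k. real_of_int (g k))"
  define X where "X = (\<lambda>(k::int^'n) i. real_of_int (k$i))"
  define d where "d = real CARD('n)"
  have sd: "real_of_int s \<ge> d - 2" using s unfolding d_def by linarith
  have s0: "real_of_int s \<ge> 0" using sd d2 unfolding d_def by linarith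
  define e where "e = - real_of_int s / 2"
  have e0: "e \<le> 0" unfolding e_def using s0 by simp
  have e2: "2*e = - real_of_int s" unfolding e_def by simp
  have Ar: "(\<Sum>k\<in>S. G k) = 0" unfolding G_def S_def using arg_cong[OF A, of real_of_int] by simp
  have Br: "\<And>i. (\<Sum>k\<in>S. G k * X k i) = 0"
  proof -
    fix i show "(\<Sum>k\<in>S. G k * X k i) = 0"
      unfolding G_def X_def S_def using arg_cong[OF B[of i], of real_of_int] by simp
  qed
  define i0 where "i0 = (undefined :: 'n)"
  define M where "M = (\<Sum>k\<in>S. G k * X k i0 * X k i0)"
  have Mr: "\<And>i j. (\<Sum>k\<in>S. G k * X k i * X k j) = (if i = j then M else 0)"
  proof -
    fix i j :: 'n
    show "(\<Sum>k\<in>S. G k * X k i * X k j) = (if i = j then M else 0)"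
    proof (cases "i = j")
      case False
      thus ?thesis unfolding G_def X_def S_def using arg_cong[OF C[OF False], of real_of_int] by simp
    next
      case True
      show ?thesis
      proof (cases "i = i0")
        case True2: True
        thus ?thesis using True unfolding M_def by simp
      next
        case False
        have "(\<Sum>k\<in>S. G k * ((X k i)^2 - (X k i0)^2)) = 0"
          unfolding G_def X_def S_def using arg_cong[OF D[OF False], of real_of_int] by simp
        hence "(\<Sum>k\<in>S. G k * X k i * X k i) - (\<Sum>k\<in>S. G k * X k i0 * X k i0) = 0"
          by (simp add: sum_subtractf[symmetric] power2_eq_square algebra_simps)
        thus ?thesis using True unfolding M_def by simp
      qed
    qed
  qed
  define Rmax where "Rmax = Max (insert 0 (lnorm ` S))"
  have R0: "Rmax \<ge> 0" unfolding Rmax_def using finS by simp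
  have Rk: "\<And>k. k \<in> S \<Longrightarrow> lnorm k \<le> Rmax" unfolding Rmax_def using finS by simp
  define Crem where "Crem = (27*\<bar>e*(e-1)*(e-2)\<bar> * 4 powr (3-e) + 18*\<bar>e*(e-1)\<bar> * 4 powr (2-e))/6"
  have C0: "Crem \<ge> 0" unfolding Crem_def by simp
  define Gs where "Gs = (\<Sum>k\<in>S. \<bar>G k\<bar>)"
  define coef where "coef = e * M * (2*e - 2 + d)"
  define K0 where "K0 = \<bar>coef\<bar> + Gs * Crem * Rmax^3"
  define B0 where "B0 = 2*Rmax + 1"
  have "\<forall>n. lnorm n \<ge> B0 \<longrightarrow> \<bar>conv g (omega s) n\<bar> \<le> K0 * lnorm n powr (-(d+1))"
  proof (intro allI impI)
    fix n :: "int^'n" assume nB: "lnorm n \<ge> B0"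
    define L where "L = lnorm n"
    have L1: "L \<ge> 1" using nB R0 unfolding L_def B0_def by linarith
    define N where "N = rv n"
    have NL: "norm N = L" unfolding N_def L_def by (simp add: norm_rv)
    define a where "a = N \<bullet> N"
    have aL: "a = L^2" unfolding a_def NL[symmetric] by (rule power2_norm_eq_inner[symmetric])
    have a_sum: "a = (\<Sum>i\<in>UNIV. (real_of_int (n$i))^2)" unfolding a_def N_def by (rule inner_rv_self)
    define Pk where "Pk = (\<lambda>k. a powr e + e * a powr (e-1) * (-2*(N \<bullet> rv k))
          + (e*(e-1) * a powr (e-2) * (-2*(N \<bullet> rv k))^2 + e * a powr (e-1) * (2*(rv k \<bullet> rv k))) / 2)"
    define Ek where "Ek = (\<lambda>k. omega s (n - k) - Pk k)"
    have Ekb: "\<And>k. k \<in> S \<Longrightarrow> \<bar>Ek k\<bar> \<le> Crem * Rmax^3 * L powr (2*e-3)"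
    proof -
      fix k assume k: "k \<in> S"
      have kR: "norm (rv k) \<le> Rmax" using Rk[OF k] by (simp add: norm_rv)
      have KN: "norm (rv k) \<le> norm N / 2" using kR NL nB unfolding L_def B0_def by linarith
      have N1: "norm N \<ge> 1" using NL L1 by simp
      have nk: "n - k \<noteq> 0" using KN N1 by (auto simp: N_def)
      have om: "omega s (n - k) = norm (N - rv k) powr (2*e)"
        using nk unfolding omega_def e2 N_def by (simp add: norm_rv[symmetric] rv_diff)
      have te: "\<bar>norm (N - rv k) powr (2*e) - Pk k\<bar> \<le> Crem * norm (rv k) ^3 * norm N powr (2*e-3)"
        using term_expand[OF N1 KN e0] unfolding Pk_def a_def Crem_def .
      have "Crem * norm (rv k) ^3 * norm N powr (2*e-3) \<le> Crem * Rmax^3 * norm N powr (2*e-3)"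
        by (intro mult_right_mono mult_left_mono power_mono kR C0) auto
      thus "\<bar>Ek k\<bar> \<le> Crem * Rmax^3 * L powr (2*e-3)" using te om NL unfolding Ek_def by simp
    qed
    have convsplit: "conv g (omega s) n = (\<Sum>k\<in>S. G k * Pk k) + (\<Sum>k\<in>S. G k * Ek k)"
      unfolding conv_def S_def[symmetric] Ek_def
      by (simp add: sum.distrib[symmetric] algebra_simps G_def)
    have bk: "\<And>k. N \<bullet> rv k = (\<Sum>i\<in>UNIV. real_of_int (n$i) * X k i)"
      unfolding N_def X_def by (simp add: inner_rv)
    have ck: "\<And>k. rv k \<bullet> rv k = (\<Sum>i\<in>UNIV. (X k i)^2)"
      unfolding X_def by (simp add: inner_rv_self)
    have GP: "\<And>k. G k * Pk k = a powr e * G k + (-2*e*a powr (e-1)) * (G k * (N \<bullet> rv k))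
        + (2*e*(e-1)*a powr (e-2)) * (G k * (N \<bullet> rv k)^2) + (e*a powr (e-1)) * (G k * (rv k \<bullet> rv k))"
      unfolding Pk_def by (simp add: power2_eq_square field_simps)
    have s1: "(\<Sum>k\<in>S. G k * (N \<bullet> rv k)) = 0" unfolding bk by (rule sum_lin[OF Br])
    have s2: "(\<Sum>k\<in>S. G k * (N \<bullet> rv k)^2) = M * a" unfolding bk a_sum by (rule sum_quad(1)[OF Mr])
    have s3: "(\<Sum>k\<in>S. G k * (rv k \<bullet> rv k)) = M * d" unfolding ck d_def by (rule sum_quad(2)[OF Mr])
    have apos: "a > 0" using aL L1 by simp
    have ha: "a powr (e-1) = a * a powr (e-2)"
    proof -
      have "a powr (e-2) * a powr 1 = a powr (e-2+1)" by (rule powr_add[symmetric])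
      thus ?thesis using apos by (simp add: mult.commute)
    qed
    have "(\<Sum>k\<in>S. G k * Pk k) = a powr e * (\<Sum>k\<in>S. G k) + (-2*e*a powr (e-1)) * (\<Sum>k\<in>S. G k * (N \<bullet> rv k))
        + (2*e*(e-1)*a powr (e-2)) * (\<Sum>k\<in>S. G k * (N \<bullet> rv k)^2) + (e*a powr (e-1)) * (\<Sum>k\<in>S. G k * (rv k \<bullet> rv k))"
      unfolding GP by (simp add: sum.distrib sum_subtractf sum_negf sum_distrib_left)
    also have "\<dots> = (2*e*(e-1)*a powr (e-2)) * (M * a) + (e*a powr (e-1)) * (M * d)"
      unfolding Ar s1 s2 s3 by simp
    also have "\<dots> = coef * a powr (e-1)"
      unfolding coef_def ha by (simp add: algebra_simps)
    also have "a powr (e-1) = L powr (2*e-2)"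
      using L1 aL sq_powr[of L "e-1"] by (simp add: algebra_simps)
    finally have sP: "(\<Sum>k\<in>S. G k * Pk k) = coef * L powr (2*e-2)" .
    have sE: "\<bar>\<Sum>k\<in>S. G k * Ek k\<bar> \<le> Gs * (Crem * Rmax^3 * L powr (2*e-3))"
    proof -
      have "\<bar>\<Sum>k\<in>S. G k * Ek k\<bar> \<le> (\<Sum>k\<in>S. \<bar>G k\<bar> * \<bar>Ek k\<bar>)"
        unfolding abs_mult[symmetric] by (rule sum_abs)
      also have "\<dots> \<le> (\<Sum>k\<in>S. \<bar>G k\<bar> * (Crem * Rmax^3 * L powr (2*e-3)))"
        by (intro sum_mono mult_left_mono Ekb) auto
      also have "\<dots> = Gs * (Crem * Rmax^3 * L powr (2*e-3))" unfolding Gs_def by (simp add: sum_distrib_right)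
      finally show ?thesis .
    qed
    have p3: "L powr (2*e-3) \<le> L powr (-(d+1))"
      by (rule powr_mono) (use L1 sd e2 in auto)
    have p2: "\<bar>coef\<bar> * L powr (2*e-2) \<le> \<bar>coef\<bar> * L powr (-(d+1))"
    proof (cases "coef = 0")
      case False
      hence "2*e - 2 + d \<noteq> 0" unfolding coef_def by auto
      hence "real_of_int s \<noteq> d - 2" using e2 by linarith
      hence "s \<noteq> int CARD('n) - 2" unfolding d_def by auto
      hence "s \<ge> int CARD('n) - 1" using s by linarith
      hence "real_of_int s \<ge> real_of_int (int CARD('n) - 1)" by (simp only: of_int_le_iff)
      hence "real_of_int s \<ge> d - 1" unfolding d_def by simp
      hence "L powr (2*e-2) \<le> L powr (-(d+1))"
        by (intro powr_mono) (use L1 e2 in auto)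
      thus ?thesis by (simp add: mult_left_mono)
    qed simp
    have "\<bar>conv g (omega s) n\<bar> = \<bar>coef * L powr (2*e-2) + (\<Sum>k\<in>S. G k * Ek k)\<bar>"
      unfolding convsplit sP ..
    also have "\<dots> \<le> \<bar>coef * L powr (2*e-2)\<bar> + \<bar>\<Sum>k\<in>S. G k * Ek k\<bar>" by (rule abs_triangle_ineq)
    also have "\<bar>coef * L powr (2*e-2)\<bar> = \<bar>coef\<bar> * L powr (2*e-2)" by (simp add: abs_mult)
    also have "\<bar>coef\<bar> * L powr (2*e-2) + \<bar>\<Sum>k\<in>S. G k * Ek k\<bar> \<le> \<bar>coef\<bar> * L powr (2*e-2) + Gs * (Crem * Rmax^3 * L powr (2*e-3))"
      by (rule add_left_mono[OF sE])
    also have "\<dots> \<le> \<bar>coef\<bar> * L powr (-(d+1)) + Gs * (Crem * Rmax^3 * L powr (-(d+1)))"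
      apply (intro add_mono p2 mult_left_mono p3)
      using C0 R0 by (auto simp: Gs_def sum_nonneg)
    also have "\<dots> = K0 * L powr (-(d+1))" unfolding K0_def by (simp add: algebra_simps)
    finally show "\<bar>conv g (omega s) n\<bar> \<le> K0 * lnorm n powr (-(d+1))" unfolding L_def .
  qed
  thus ?thesis unfolding d_def by blast
qed

theorem lemma2p9:
  fixes g :: "int ^ 'n::finite \<Rightarrow> int" and s :: int
  assumes d2: "CARD('n) \<ge> 2"
    and lp: "laurent_poly g"
    and A: "(\<Sum>k\<in>supp g. g k) = 0"
    and B: "\<And>i. (\<Sum>k\<in>supp g. g k * k $ i) = 0"
    and C: "\<And>i j. i \<noteq> j \<Longrightarrow> (\<Sum>k\<in>supp g. g k * k $ i * k $ j) = 0"
    and D: "\<And>i j. i \<noteq> j \<Longrightarrow> (\<Sum>k\<in>supp g. g k * ((k $ i)\<^sup>2 - (k $ j)\<^sup>2)) = 0"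
    and s: "s \<ge> int CARD('n) - 2"
  shows "(\<lambda>n. \<bar>conv g (omega s) n\<bar>) summable_on UNIV"
proof -
  obtain K0 B0 where KB: "\<And>n. lnorm n \<ge> B0 \<Longrightarrow> \<bar>conv g (omega s) n\<bar> \<le> K0 * lnorm n powr (-(real CARD('n)+1))"
    using main_bound[OF d2 lp A B C D s] by blast
  define B1 where "B1 = max B0 1"
  define F where "F = {n::int^'n. lnorm n < B1}"
  have finF: "finite F" unfolding F_def by (rule finite_lnorm_ball)
  define h where "h = (\<lambda>n::int^'n. if n = 0 then 0 else lnorm n powr (-(real CARD('n)+1)))"
  have hs: "h summable_on UNIV" unfolding h_def by (rule lattice_summable)
  have hs2: "(\<lambda>n. \<bar>K0\<bar> * h n) summable_on (UNIV - F)"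
    by (rule summable_on_subset[OF summable_on_cmult_right[OF hs]]) auto
  have p1: "(\<lambda>n. \<bar>conv g (omega s) n\<bar>) summable_on (UNIV - F)"
  proof (rule summable_on_comparison_test[OF hs2])
    fix n assume "n \<in> UNIV - F"
    hence n: "lnorm n \<ge> B1" unfolding F_def by simp
    hence n0: "n \<noteq> 0" unfolding B1_def by (auto simp: lnorm_def)
    have "\<bar>conv g (omega s) n\<bar> \<le> K0 * lnorm n powr (-(real CARD('n)+1))"
      using KB n unfolding B1_def by simp
    also have "\<dots> \<le> \<bar>K0\<bar> * h n" using n0 unfolding h_def by (simp add: mult_right_mono)
    finally show "\<bar>conv g (omega s) n\<bar> \<le> \<bar>K0\<bar> * h n" .
  qed simp
  have p2: "(\<lambda>n. \<bar>conv g (omega s) n\<bar>) summable_on F" using finF by simp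
  have "(\<lambda>n. \<bar>conv g (omega s) n\<bar>) summable_on ((UNIV - F) \<union> F)"
    by (rule summable_on_Un_disjoint[OF p1 p2]) auto
  thus ?thesis by simp
qed

end
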